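(* Let $P_n=\mathcal{N}(0,1)^{\otimes n}$, $Q_n=\mathcal{N}(\mu,1)^{\otimes n}$ with $\mu\in\mathbb{R}$, $M_n=\frac1n\sum_{i=1}^nX_i$, and $B=(-\infty,-b]\cup[1,\infty)$ with $b>1$. For $\mu=1$, $$I_Q^B(w)=\begin{cases}\tfrac12(w-\tfrac12)^2,& w\ge\tfrac12\ \text{or}\ w\le-b-\tfrac12,\\ +\infty,&\text{otherwise},\end{cases}$$ and $-2\in\partial I_Q^B(1/2)$ if and only if $b\ge3$. Moreover, $(Q_n)$ is asymptotically efficient for estimating $P_n(M_n\in B)$ if and only if $\mu=1$ and $b\ge3$.
   Context: $\mathbf{X}_n=(X_1,\dots,X_n)$; $\mathcal{N}(\mu,1)^{\otimes n}$ is the law of $n$ i.i.d. Gaussian variables with mean $\mu$ and variance $1$. $L_n=dP_n/dQ_n$, $W_n=-\frac1n\log L_n$. $J_Q$ is the rate function of the LDP of $(M_n,W_n)$ under $Q_n$, and $I_Q^B(w)=\inf_{m\in\bar B}J_Q(m,w)$. For $f:\mathbb{R}\to[0,\infty]$, $\partial f(x)=\{k\in\mathbb{R}: f(y)\ge f(x)+k(y-x)\ \forall y\}$. $(Q_n)$ is asymptotically efficient if $R_Q(B):=\lim_n-\frac1n\log\mathbb{E}_Q[L_n^2\mathbf{1}_{M_n\in B}]$ exists and equals $2\lim_n-\frac1n\log P_n(M_n\in B)$. *)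

theory Defs
  imports "HOL-Probability.Probability"
begin

definition gauss :: "real \<Rightarrow> real measure" where
  "gauss mu = density lborel (\<lambda>x. ennreal (normal_density mu 1 x))"

text \<open>Q_n = N(mu,1)^{n}, a law on sample vectors X_n = (X_0,...,X_{n-1}); P_n = Qn 0 n.\<close>
definition Qn :: "real \<Rightarrow> nat \<Rightarrow> (nat \<Rightarrow> real) measure" where
  "Qn mu n = PiM {..<n} (\<lambda>_. gauss mu)"

definition Mn :: "nat \<Rightarrow> (nat \<Rightarrow> real) \<Rightarrow> real" where
  "Mn n x = (\<Sum>i<n. x i) / real n"

definition Ln :: "real \<Rightarrow> nat \<Rightarrow> (nat \<Rightarrow> real) \<Rightarrow> ennreal" where
  "Ln mu n = RN_deriv (Qn mu n) (Qn 0 n)"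

definition Wn :: "real \<Rightarrow> nat \<Rightarrow> (nat \<Rightarrow> real) \<Rightarrow> real" where
  "Wn mu n x = - (1 / real n) * ln (enn2real (Ln mu n x))"

definition pair_law :: "real \<Rightarrow> nat \<Rightarrow> (real \<times> real) measure" where
  "pair_law mu n = distr (Qn mu n) borel (\<lambda>x. (Mn n x, Wn mu n x))"

definition elog :: "real \<Rightarrow> ereal" where
  "elog p = (if p \<le> 0 then - \<infinity> else ereal (ln p))"

definition is_LDP_rate :: "(nat \<Rightarrow> 'a::topological_space measure) \<Rightarrow> ('a \<Rightarrow> ereal) \<Rightarrow> bool" where
  "is_LDP_rate nu I \<longleftrightarrow>
     (\<forall>x. 0 \<le> I x) \<and>
     (\<forall>c. closed {x. I x \<le> c}) \<and>
     (\<forall>F. closed F \<longrightarrow>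
        limsup (\<lambda>n. ereal (1 / real n) * elog (measure (nu n) F)) \<le> - (INF x\<in>F. I x)) \<and>
     (\<forall>G. open G \<longrightarrow>
        - (INF x\<in>G. I x) \<le> liminf (\<lambda>n. ereal (1 / real n) * elog (measure (nu n) G)))"

definition J_Q :: "real \<Rightarrow> real \<times> real \<Rightarrow> ereal" where
  "J_Q mu = (THE I. is_LDP_rate (pair_law mu) I)"

definition I_QB :: "real \<Rightarrow> real set \<Rightarrow> real \<Rightarrow> ereal" where
  "I_QB mu B w = (INF m\<in>closure B. J_Q mu (m, w))"

definition subdiff :: "(real \<Rightarrow> ereal) \<Rightarrow> real \<Rightarrow> real set" where
  "subdiff f x = {k. \<forall>y. f x + ereal (k * (y - x)) \<le> f y}"

definition asympt_efficient :: "real \<Rightarrow> real set \<Rightarrow> bool" where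
  "asympt_efficient mu B \<longleftrightarrow>
     (\<exists>r::real.
        (\<lambda>n. - ln (enn2real (\<integral>\<^sup>+ x. (Ln mu n x)\<^sup>2 * indicator {x \<in> space (Qn mu n). Mn n x \<in> B} x \<partial>(Qn mu n))) / real n)
          \<longlonglongrightarrow> r \<and>
        (\<lambda>n. - ln (measure (Qn 0 n) {x \<in> space (Qn 0 n). Mn n x \<in> B}) / real n) \<longlonglongrightarrow> r / 2)"

end

theory Submission
  imports Defs
begin


lemma prob_gauss[simp]: "prob_space (gauss mu)"
  unfolding gauss_def by (rule prob_space_normal_density) simp

lemma sets_gauss[simp, measurable_cong]: "sets (gauss mu) = sets borel"
  unfolding gauss_def by simp

lemma space_gauss[simp]: "space (gauss mu) = UNIV"
  unfolding gauss_def by simp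

lemma gauss0_density:
  "gauss 0 = density (gauss mu) (\<lambda>x. ennreal (exp (- mu * x + mu\<^sup>2 / 2)))"
proof -
  have "density (gauss mu) (\<lambda>x. ennreal (exp (- mu * x + mu\<^sup>2 / 2)))
     = density lborel (\<lambda>x. ennreal (normal_density mu 1 x) * ennreal (exp (- mu * x + mu\<^sup>2 / 2)))"
    unfolding gauss_def by (subst density_density_eq) auto
  also have "\<dots> = density lborel (\<lambda>x. ennreal (normal_density 0 1 x))"
  proof -
    have eq: "normal_density mu 1 x * exp (- mu * x + mu\<^sup>2 / 2) = normal_density 0 1 x" for x :: real
      unfolding normal_density_def by (simp add: mult.assoc exp_add[symmetric]) (simp add: power2_eq_square field_simps)
    show ?thesis
      using eq by (intro density_cong) (auto simp: ennreal_mult'[symmetric])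
  qed
  finally show ?thesis unfolding gauss_def by simp
qed

lemma indicator_PiE_prod:
  fixes A :: "nat \<Rightarrow> real set"
  shows "x \<in> space (PiM {..<n} (\<lambda>_. gauss m)) \<Longrightarrow>
     (indicator (Pi\<^sub>E {..<n} A) x :: ennreal) = (\<Prod>i<n. indicator (A i) (x i))"
proof (cases "x \<in> Pi\<^sub>E {..<n} A")
  case True
  then show ?thesis by (auto simp: indicator_def PiE_def Pi_iff intro!: prod.neutral)
next
  case False
  assume x: "x \<in> space (PiM {..<n} (\<lambda>_. gauss m))"
  then have ext: "x \<in> extensional {..<n}" by (simp add: space_PiM PiE_def)
  with False obtain i where i: "i < n" "x i \<notin> A i" by (auto simp: PiE_def Pi_iff)
  then have "(\<Prod>i<n. (indicator (A i) (x i) :: ennreal)) = 0"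
    using i by (intro prod_zero bexI[of _ i]) auto
  then show ?thesis using False by simp
qed

lemma Qn0_density:
  "Qn 0 n = density (Qn mu n) (\<lambda>x. \<Prod>i<n. ennreal (exp (- mu * x i + mu\<^sup>2 / 2)))"
proof -
  interpret product_sigma_finite "\<lambda>_. gauss 0"
    unfolding product_sigma_finite_def
    using prob_space_imp_sigma_finite prob_gauss by blast
  interpret MU: product_sigma_finite "\<lambda>_. gauss mu"
    unfolding product_sigma_finite_def
    using prob_space_imp_sigma_finite prob_gauss by blast
  let ?g = "\<lambda>y::real. ennreal (exp (- mu * y + mu\<^sup>2 / 2))"
  show ?thesis
    unfolding Qn_def
  proof (rule PiM_eqI[symmetric])
    show "finite {..<n}" by simp
    show "sets (density (PiM {..<n} (\<lambda>_. gauss mu)) (\<lambda>x. \<Prod>i<n. ?g (x i))) = sets (PiM {..<n} (\<lambda>_. gauss 0))"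
      unfolding sets_density by (intro sets_PiM_cong) simp_all
  next
    fix A :: "nat \<Rightarrow> real set"
    assume A: "\<And>i. i \<in> {..<n} \<Longrightarrow> A i \<in> sets (gauss 0)"
    have mA: "Pi\<^sub>E {..<n} A \<in> sets (PiM {..<n} (\<lambda>_. gauss mu))"
      using A by (intro sets_PiM_I_finite) auto
    have "emeasure (density (PiM {..<n} (\<lambda>_. gauss mu)) (\<lambda>x. \<Prod>i<n. ?g (x i))) (Pi\<^sub>E {..<n} A)
       = (\<integral>\<^sup>+ x. (\<Prod>i<n. ?g (x i)) * indicator (Pi\<^sub>E {..<n} A) x \<partial>PiM {..<n} (\<lambda>_. gauss mu))"
      using mA by (subst emeasure_density) auto
    also have "\<dots> = (\<integral>\<^sup>+ x. (\<Prod>i<n. ?g (x i) * indicator (A i) (x i)) \<partial>PiM {..<n} (\<lambda>_. gauss mu))"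
      by (rule nn_integral_cong) (simp add: indicator_PiE_prod prod.distrib)
    also have "\<dots> = (\<Prod>i<n. \<integral>\<^sup>+ y. ?g y * indicator (A i) y \<partial>gauss mu)"
      using A by (subst MU.product_nn_integral_prod) auto
    also have "\<dots> = (\<Prod>i<n. emeasure (gauss 0) (A i))"
    proof (rule prod.cong[OF refl])
      fix i assume "i \<in> {..<n}"
      then have "A i \<in> sets (gauss mu)" using A by simp
      then show "(\<integral>\<^sup>+ y. ?g y * indicator (A i) y \<partial>gauss mu) = emeasure (gauss 0) (A i)"
        by (subst gauss0_density[of mu]) (simp add: emeasure_density)
    qed
    finally show "emeasure (density (PiM {..<n} (\<lambda>_. gauss mu)) (\<lambda>x. \<Prod>i<n. ?g (x i))) (Pi\<^sub>E {..<n} A)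
       = (\<Prod>i\<in>{..<n}. emeasure (gauss 0) (A i))" .
  qed
qed


lemma prob_Qn[simp]: "prob_space (Qn mu n)"
  unfolding Qn_def by (rule prob_space_PiM) simp

lemma sets_Qn: "sets (Qn mu n) = sets (PiM {..<n} (\<lambda>_. borel))"
  unfolding Qn_def by (intro sets_PiM_cong) simp_all

lemma space_Qn: "space (Qn mu n) = space (PiM {..<n} (\<lambda>_. (borel::real measure)))"
  using sets_Qn by (rule sets_eq_imp_space_eq)

lemma meas_comp[measurable]: "i < n \<Longrightarrow> (\<lambda>x. x i) \<in> borel_measurable (Qn mu n)"
  by (subst measurable_cong_sets[OF sets_Qn refl]) (rule measurable_component_singleton; simp)

lemma meas_comp_all: "(\<lambda>x. x i) \<in> borel_measurable (Qn mu n)"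
proof (cases "i < n")
  case True then show ?thesis by simp
next
  case False
  have "(\<lambda>x. x i) \<in> borel_measurable (Qn mu n) \<longleftrightarrow> (\<lambda>x. undefined::real) \<in> borel_measurable (Qn mu n)"
  proof (rule measurable_cong)
    fix w assume "w \<in> space (Qn mu n)"
    then show "w i = undefined" using False by (auto simp: space_Qn space_PiM PiE_def extensional_def)
  qed
  then show ?thesis by simp
qed

lemma meas_Mn[measurable]: "Mn n \<in> borel_measurable (Qn mu n)"
  unfolding Mn_def by measurable

lemma Ln_AE: "AE x in Qn mu n. Ln mu n x = ennreal (exp (- mu * (\<Sum>i<n. x i) + real n * mu\<^sup>2 / 2))"
proof -
  interpret prob_space "Qn mu n" by simp
  have F: "(\<lambda>x. \<Prod>i<n. ennreal (exp (- mu * x i + mu\<^sup>2 / 2))) = (\<lambda>x. ennreal (exp (- mu * (\<Sum>i<n. x i) + real n * mu\<^sup>2 / 2)))"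
  proof
    fix x :: "nat \<Rightarrow> real"
    have "(\<Prod>i<n. ennreal (exp (- mu * x i + mu\<^sup>2 / 2))) = ennreal (\<Prod>i<n. exp (- mu * x i + mu\<^sup>2 / 2))"
      by (rule prod_ennreal) simp
    also have "(\<Prod>i<n. exp (- mu * x i + mu\<^sup>2 / 2)) = exp (\<Sum>i<n. - mu * x i + mu\<^sup>2 / 2)"
      by (simp add: exp_sum)
    also have "(\<Sum>i<n. - mu * x i + mu\<^sup>2 / 2) = - mu * (\<Sum>i<n. x i) + real n * mu\<^sup>2 / 2"
      by (simp add: sum_subtractf sum_negf sum_distrib_left[symmetric])
    finally show "(\<Prod>i<n. ennreal (exp (- mu * x i + mu\<^sup>2 / 2))) = ennreal (exp (- mu * (\<Sum>i<n. x i) + real n * mu\<^sup>2 / 2))" .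
  qed
  have "AE x in Qn mu n. ennreal (exp (- mu * (\<Sum>i<n. x i) + real n * mu\<^sup>2 / 2)) = RN_deriv (Qn mu n) (Qn 0 n) x"
  proof (rule RN_deriv_unique)
    show "density (Qn mu n) (\<lambda>x. ennreal (exp (- mu * (\<Sum>i<n. x i) + real n * mu\<^sup>2 / 2))) = Qn 0 n"
      by (subst Qn0_density[of n mu]) (simp only: F)
  qed simp
  then show ?thesis unfolding Ln_def by auto
qed

lemma Mn_distributed:
  assumes n: "n > 0"
  shows "distributed (Qn mu n) lborel (Mn n) (\<lambda>x. ennreal (normal_density mu (1 / sqrt (real n)) x))"
proof -
  interpret prob_space "Qn mu n" by simp
  have rv: "random_variable borel (\<lambda>x. x i)" if "i \<in> {..<n}" for i
    using that by simp
  have comp: "distr (Qn mu n) borel (\<lambda>x. x i) = gauss mu" if "i \<in> {..<n}" for i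
  proof -
    have "distr (Qn mu n) borel (\<lambda>x. x i) = distr (Qn mu n) (gauss mu) (\<lambda>x. x i)"
      by (rule distr_cong) auto
    also have "\<dots> = gauss mu"
      unfolding Qn_def by (rule distr_PiM_component) (use that in auto)
    finally show ?thesis .
  qed
  have "indep_vars (\<lambda>_. borel) (\<lambda>i x. x i) {..<n}"
  proof (subst indep_vars_iff_distr_eq_PiM)
    show "{..<n} \<noteq> {}" using n by auto
    show "random_variable borel (\<lambda>x. x i)" for i by (rule meas_comp_all)
    have "distr (Qn mu n) (Pi\<^sub>M {..<n} (\<lambda>i. borel)) (\<lambda>x. \<lambda>i\<in>{..<n}. x i)
        = distr (Qn mu n) (Qn mu n) (\<lambda>x. x)"
    proof (rule distr_cong[OF refl])
      show "sets (Pi\<^sub>M {..<n} (\<lambda>i. borel)) = sets (Qn mu n)" by (simp add: sets_Qn)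
      fix x assume "x \<in> space (Qn mu n)"
      then have "x \<in> extensional {..<n}" by (simp add: space_Qn space_PiM PiE_def)
      then show "(\<lambda>i\<in>{..<n}. x i) = x" by (rule extensional_restrict)
    qed
    also have "\<dots> = Qn mu n" by (rule distr_id)
    also have "\<dots> = Pi\<^sub>M {..<n} (\<lambda>i. distr (Qn mu n) borel (\<lambda>x. x i))"
      unfolding Qn_def using comp by (intro PiM_cong) (auto simp: Qn_def)
    finally show "distr (Qn mu n) (Pi\<^sub>M {..<n} (\<lambda>i. borel)) (\<lambda>x. \<lambda>i\<in>{..<n}. x i)
        = Pi\<^sub>M {..<n} (\<lambda>i. distr (Qn mu n) borel (\<lambda>x. x i))" .
  qed
  moreover have "distributed (Qn mu n) lborel (\<lambda>x. x i) (normal_density mu 1)" if "i \<in> {..<n}" for i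
  proof -
    have "distr (Qn mu n) lborel (\<lambda>x. x i) = distr (Qn mu n) borel (\<lambda>x. x i)"
      by (rule distr_cong) auto
    then show ?thesis using comp[OF that] that
      unfolding distributed_def by (auto simp: gauss_def)
  qed
  ultimately have S: "distributed (Qn mu n) lborel (\<lambda>x. \<Sum>i\<in>{..<n}. x i) (normal_density (\<Sum>i\<in>{..<n}. mu) (sqrt (\<Sum>i\<in>{..<n}. 1\<^sup>2)))"
    using n by (intro sum_indep_normal) (auto simp: lessThan_empty_iff)
  have S': "distributed (Qn mu n) lborel (\<lambda>x. \<Sum>i\<in>{..<n}. x i) (normal_density (real n * mu) (sqrt (real n)))"
    using S by simp
  have "distributed (Qn mu n) lborel (\<lambda>x. 0 + (1 / real n) * (\<Sum>i\<in>{..<n}. x i))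
      (normal_density (0 + (1 / real n) * (real n * mu)) (\<bar>1 / real n\<bar> * sqrt (real n)))"
    by (rule normal_density_affine[OF S']) (use n in simp_all)
  moreover have "(\<lambda>x. 0 + (1 / real n) * (\<Sum>i\<in>{..<n}. x i)) = Mn n"
    by (auto simp: Mn_def)
  moreover have "0 + (1 / real n) * (real n * mu) = mu" using n by simp
  moreover have "\<bar>1 / real n\<bar> * sqrt (real n) = 1 / sqrt (real n)"
  proof -
    have "sqrt (real n) * sqrt (real n) = real n" by simp
    then show ?thesis using n by (simp add: field_simps)
  qed
  ultimately show ?thesis by (simp only:)
qed




definition gN :: "real \<Rightarrow> real \<Rightarrow> real measure" where
  "gN c s = density lborel (\<lambda>x. ennreal (normal_density c s x))"

lemma prob_gN: "0 < s \<Longrightarrow> prob_space (gN c s)"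
  unfolding gN_def by (rule prob_space_normal_density) simp

lemma sets_gN[simp]: "sets (gN c s) = sets borel"
  unfolding gN_def by simp

lemma nn_integral_normal: "0 < s \<Longrightarrow> (\<integral>\<^sup>+x. ennreal (normal_density c s x) \<partial>lborel) = 1"
  by (subst nn_integral_eq_integral) auto

lemma normal_shift_bound:
  assumes s: "0 < s" and d: "0 \<le> d" and xd: "d \<le> \<bar>x - c\<bar>"
  shows "normal_density c s x \<le> exp (- d\<^sup>2 / (2 * s\<^sup>2)) * (normal_density (c + d) s x + normal_density (c - d) s x)"
proof -
  define K where "K = 1 / sqrt (2 * pi * s\<^sup>2)"
  have K: "K \<ge> 0" unfolding K_def by simp
  have v: "2 * s\<^sup>2 > 0" using s by simp
  have key: "exp (- (x - c)\<^sup>2 / (2 * s\<^sup>2)) \<le> exp (- d\<^sup>2 / (2 * s\<^sup>2)) * exp (- (x - e)\<^sup>2 / (2 * s\<^sup>2))"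
    if e: "e = c + d \<and> x - c \<ge> d \<or> e = c - d \<and> c - x \<ge> d" for e
  proof -
    have "(x - c)\<^sup>2 \<ge> d\<^sup>2 + (x - e)\<^sup>2"
      using e
    proof
      assume h: "e = c + d \<and> x - c \<ge> d"
      then have nn: "0 \<le> (x - e) * d" using d by simp
      have eq: "x - c = (x - e) + d" using h by simp
      have "(x - c)\<^sup>2 = ((x - e) + d)\<^sup>2" by (simp only: eq)
      also have "\<dots> = (x - e)\<^sup>2 + 2 * ((x - e) * d) + d\<^sup>2" by (simp add: power2_sum)
      finally show ?thesis using nn by linarith
    next
      assume h: "e = c - d \<and> c - x \<ge> d"
      then have nn: "0 \<le> (e - x) * d" using d by simp
      have eq: "x - c = (x - e) - d" using h by simp
      have "(x - c)\<^sup>2 = ((x - e) - d)\<^sup>2" by (simp only: eq)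
      also have "\<dots> = (x - e)\<^sup>2 + 2 * ((e - x) * d) + d\<^sup>2" by (simp add: power2_eq_square algebra_simps)
      finally show ?thesis using nn by linarith
    qed
    then have "- (x - c)\<^sup>2 / (2 * s\<^sup>2) \<le> - d\<^sup>2 / (2 * s\<^sup>2) + - (x - e)\<^sup>2 / (2 * s\<^sup>2)"
      using v by (simp add: divide_simps)
    then show ?thesis by (simp add: exp_add[symmetric])
  qed
  have "x - c \<ge> d \<or> c - x \<ge> d" using xd by linarith
  then show ?thesis
  proof
    assume h: "x - c \<ge> d"
    have "normal_density c s x \<le> exp (- d\<^sup>2 / (2 * s\<^sup>2)) * normal_density (c + d) s x"
      using key[of "c + d"] h K unfolding normal_density_def K_def[symmetric]
      by (simp add: mult_left_mono mult.left_commute)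
    also have "\<dots> \<le> exp (- d\<^sup>2 / (2 * s\<^sup>2)) * (normal_density (c + d) s x + normal_density (c - d) s x)"
      by (intro mult_left_mono) auto
    finally show ?thesis .
  next
    assume h: "c - x \<ge> d"
    have "normal_density c s x \<le> exp (- d\<^sup>2 / (2 * s\<^sup>2)) * normal_density (c - d) s x"
      using key[of "c - d"] h K unfolding normal_density_def K_def[symmetric]
      by (simp add: mult_left_mono mult.left_commute)
    also have "\<dots> \<le> exp (- d\<^sup>2 / (2 * s\<^sup>2)) * (normal_density (c + d) s x + normal_density (c - d) s x)"
      by (intro mult_left_mono) auto
    finally show ?thesis .
  qed
qed

lemma gN_upper:
  assumes s: "0 < s" and d: "0 \<le> d" and A: "A \<in> sets borel" and Ad: "\<forall>x\<in>A. d \<le> \<bar>x - c\<bar>"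
  shows "measure (gN c s) A \<le> 2 * exp (- d\<^sup>2 / (2 * s\<^sup>2))"
proof -
  interpret prob_space "gN c s" using prob_gN[OF s] .
  let ?E = "exp (- d\<^sup>2 / (2 * s\<^sup>2))"
  have "emeasure (gN c s) A = (\<integral>\<^sup>+x. ennreal (normal_density c s x) * indicator A x \<partial>lborel)"
    unfolding gN_def using A by (subst emeasure_density) auto
  also have "\<dots> \<le> (\<integral>\<^sup>+x. ennreal ?E * (ennreal (normal_density (c + d) s x) + ennreal (normal_density (c - d) s x)) \<partial>lborel)"
  proof (rule nn_integral_mono)
    fix x
    show "ennreal (normal_density c s x) * indicator A x \<le> ennreal ?E * (ennreal (normal_density (c + d) s x) + ennreal (normal_density (c - d) s x))"
    proof (cases "x \<in> A")
      case True
      then have "normal_density c s x \<le> ?E * (normal_density (c + d) s x + normal_density (c - d) s x)"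
        using normal_shift_bound[OF s d] Ad by auto
      then show ?thesis using True
        by (simp add: ennreal_mult'[symmetric] ennreal_plus[symmetric] del: ennreal_plus)
    qed simp
  qed
  also have "\<dots> = ennreal ?E * ((\<integral>\<^sup>+x. ennreal (normal_density (c + d) s x) \<partial>lborel) + (\<integral>\<^sup>+x. ennreal (normal_density (c - d) s x) \<partial>lborel))"
    by (subst nn_integral_cmult) (auto simp: nn_integral_add)
  also have "\<dots> = ennreal (2 * ?E)"
    using s by (simp add: nn_integral_normal ennreal_mult' mult.commute)
  finally have "ennreal (measure (gN c s) A) \<le> ennreal (2 * ?E)"
    by (simp add: emeasure_eq_measure)
  then show ?thesis by (simp add: ennreal_le_iff)
qed

lemma gN_lower:
  assumes s: "0 < s" and e: "0 < e" and A: "A \<in> sets borel"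
    and I: "{a..a+e} \<subseteq> A \<or> {a-e..a} \<subseteq> A"
  shows "e * (1 / sqrt (2 * pi * s\<^sup>2)) * exp (- (\<bar>a - c\<bar> + e)\<^sup>2 / (2 * s\<^sup>2)) \<le> measure (gN c s) A"
proof -
  interpret prob_space "gN c s" using prob_gN[OF s] .
  obtain l where l: "{l..l+e} \<subseteq> A" "l = a \<or> l = a - e"
    using I by (metis diff_add_cancel)
  let ?K = "1 / sqrt (2 * pi * s\<^sup>2) * exp (- (\<bar>a - c\<bar> + e)\<^sup>2 / (2 * s\<^sup>2))"
  have pt: "?K \<le> normal_density c s x" if x: "x \<in> {l..l+e}" for x
  proof -
    have "\<bar>x - c\<bar> \<le> \<bar>a - c\<bar> + e" using x l by auto
    then have "(x - c)\<^sup>2 \<le> (\<bar>a - c\<bar> + e)\<^sup>2"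
      by (metis abs_ge_zero abs_le_square_iff abs_of_nonneg e add_nonneg_nonneg less_imp_le)
    then have "- (\<bar>a - c\<bar> + e)\<^sup>2 / (2 * s\<^sup>2) \<le> - (x - c)\<^sup>2 / (2 * s\<^sup>2)"
      using s by (simp add: divide_simps)
    then show ?thesis unfolding normal_density_def by (intro mult_left_mono) auto
  qed
  have "ennreal (?K * e) = ennreal ?K * ennreal e"
    by (rule ennreal_mult') simp
  also have "\<dots> = (\<integral>\<^sup>+x. ennreal ?K * indicator {l..l+e} x \<partial>lborel)"
    using e by (simp add: nn_integral_cmult_indicator)
  also have "\<dots> \<le> (\<integral>\<^sup>+x. ennreal (normal_density c s x) * indicator A x \<partial>lborel)"
  proof (rule nn_integral_mono)
    fix x show "ennreal ?K * indicator {l..l+e} x \<le> ennreal (normal_density c s x) * indicator A x"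
      using pt[of x] l(1) by (auto simp: indicator_def)
  qed
  also have "\<dots> = emeasure (gN c s) A"
    unfolding gN_def using A by (subst emeasure_density) auto
  finally have "ennreal (?K * e) \<le> ennreal (measure (gN c s) A)"
    by (simp add: emeasure_eq_measure)
  then show ?thesis by (simp add: ennreal_le_iff mult.commute mult.left_commute)
qed




lemma sig_n:
  assumes n: "0 < n"
  shows "0 < 1 / sqrt (real n)" "(1 / sqrt (real n))\<^sup>2 = 1 / real n"
  using n by (auto simp: power_divide)

lemma gNn_upper:
  assumes n: "0 < n" and d: "0 \<le> d" and A: "A \<in> sets borel" and Ad: "\<forall>x\<in>A. d \<le> \<bar>x - c\<bar>"
  shows "measure (gN c (1 / sqrt (real n))) A \<le> 2 * exp (- real n * d\<^sup>2 / 2)"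
proof -
  have "measure (gN c (1 / sqrt (real n))) A \<le> 2 * exp (- d\<^sup>2 / (2 * (1 / sqrt (real n))\<^sup>2))"
    by (rule gN_upper[OF sig_n(1)[OF n] d A Ad])
  also have "- d\<^sup>2 / (2 * (1 / sqrt (real n))\<^sup>2) = - real n * d\<^sup>2 / 2"
    using n by (simp add: sig_n(2)[OF n])
  finally show ?thesis .
qed

lemma gNn_lower:
  assumes n: "0 < n" and e: "0 < e" and A: "A \<in> sets borel"
    and I: "{a..a+e} \<subseteq> A \<or> {a-e..a} \<subseteq> A"
  shows "e / sqrt (2 * pi) * exp (- real n * (\<bar>a - c\<bar> + e)\<^sup>2 / 2) \<le> measure (gN c (1 / sqrt (real n))) A"
proof -
  have "e * (1 / sqrt (2 * pi * (1 / sqrt (real n))\<^sup>2)) * exp (- (\<bar>a - c\<bar> + e)\<^sup>2 / (2 * (1 / sqrt (real n))\<^sup>2))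
      \<le> measure (gN c (1 / sqrt (real n))) A"
    by (rule gN_lower[OF sig_n(1)[OF n] e A I])
  moreover have "- (\<bar>a - c\<bar> + e)\<^sup>2 / (2 * (1 / sqrt (real n))\<^sup>2) = - real n * (\<bar>a - c\<bar> + e)\<^sup>2 / 2"
    using n by (simp add: sig_n(2)[OF n])
  moreover have "e / sqrt (2 * pi) \<le> e * (1 / sqrt (2 * pi * (1 / sqrt (real n))\<^sup>2))"
  proof -
    have "1 / sqrt (2 * pi * (1 / sqrt (real n))\<^sup>2) = sqrt (real n) / sqrt (2 * pi)"
      using n by (simp add: sig_n(2)[OF n] real_sqrt_divide)
    moreover have "1 \<le> sqrt (real n)" using n by simp
    ultimately show ?thesis using e by (simp add: divide_right_mono)
  qed
  ultimately show ?thesis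
    by (smt (verit, best) exp_gt_zero mult_right_mono)
qed

lemma elog_mono: "p \<le> q \<Longrightarrow> elog p \<le> elog q"
  by (auto simp: elog_def)

lemma log_upper:
  assumes n: "0 < n" and A: "A \<in> sets borel" and D: "0 \<le> D" and AD: "\<forall>x\<in>A. D \<le> (x - c)\<^sup>2 / 2"
  shows "elog (measure (gN c (1 / sqrt (real n))) A) \<le> ereal (ln 2 - real n * D)"
proof -
  define d where "d = sqrt (2 * D)"
  have d: "0 \<le> d" unfolding d_def using D by simp
  have "\<forall>x\<in>A. d \<le> \<bar>x - c\<bar>"
  proof
    fix x assume "x \<in> A"
    then have "2 * D \<le> (x - c)\<^sup>2" using AD by auto
    then have "sqrt (2 * D) \<le> sqrt ((x - c)\<^sup>2)" by (rule real_sqrt_le_mono)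
    then show "d \<le> \<bar>x - c\<bar>" by (simp add: d_def)
  qed
  from gNn_upper[OF n d A this]
  have P: "measure (gN c (1 / sqrt (real n))) A \<le> 2 * exp (- real n * D)"
    using D by (simp add: d_def)
  show ?thesis
  proof (cases "measure (gN c (1 / sqrt (real n))) A \<le> 0")
    case True then show ?thesis by (simp add: elog_def)
  next
    case False
    then have "ln (measure (gN c (1 / sqrt (real n))) A) \<le> ln (2 * exp (- real n * D))"
      using P by (intro ln_mono) auto
    also have "\<dots> = ln 2 - real n * D" by (simp add: ln_mult)
    finally show ?thesis using False by (simp add: elog_def)
  qed
qed

lemma log_lower:
  assumes n: "0 < n" and e: "0 < e" and A: "A \<in> sets borel"
    and I: "{a..a+e} \<subseteq> A \<or> {a-e..a} \<subseteq> A"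
  shows "0 < measure (gN c (1 / sqrt (real n))) A"
    "ln (e / sqrt (2 * pi)) - real n * (\<bar>a - c\<bar> + e)\<^sup>2 / 2 \<le> ln (measure (gN c (1 / sqrt (real n))) A)"
proof -
  have L: "e / sqrt (2 * pi) * exp (- real n * (\<bar>a - c\<bar> + e)\<^sup>2 / 2) \<le> measure (gN c (1 / sqrt (real n))) A"
    by (rule gNn_lower[OF n e A I])
  have pos: "0 < e / sqrt (2 * pi) * exp (- real n * (\<bar>a - c\<bar> + e)\<^sup>2 / 2)" using e by simp
  then show "0 < measure (gN c (1 / sqrt (real n))) A" using L by linarith
  have "ln (e / sqrt (2 * pi) * exp (- real n * (\<bar>a - c\<bar> + e)\<^sup>2 / 2)) \<le> ln (measure (gN c (1 / sqrt (real n))) A)"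
    using L pos by (intro ln_mono) auto
  moreover have "ln (e / sqrt (2 * pi) * exp (- real n * (\<bar>a - c\<bar> + e)\<^sup>2 / 2)) = ln (e / sqrt (2 * pi)) - real n * (\<bar>a - c\<bar> + e)\<^sup>2 / 2"
    using e by (subst ln_mult) auto
  ultimately show "ln (e / sqrt (2 * pi)) - real n * (\<bar>a - c\<bar> + e)\<^sup>2 / 2 \<le> ln (measure (gN c (1 / sqrt (real n))) A)"
    by simp
qed

definition gg :: "real \<Rightarrow> real \<Rightarrow> real" where "gg mu m = mu * m - mu\<^sup>2 / 2"

lemma meas_Ln[measurable]: "Ln mu n \<in> borel_measurable (Qn mu n)"
  unfolding Ln_def by simp

lemma meas_Wn[measurable]: "Wn mu n \<in> borel_measurable (Qn mu n)"
  unfolding Wn_def by measurable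

lemma Wn_AE:
  assumes n: "0 < n"
  shows "AE x in Qn mu n. Wn mu n x = gg mu (Mn n x)"
  using Ln_AE[of mu n]
proof (rule AE_mp, intro AE_I2 impI)
  fix x assume "Ln mu n x = ennreal (exp (- mu * (\<Sum>i<n. x i) + real n * mu\<^sup>2 / 2))"
  then have "Wn mu n x = - (1 / real n) * (- mu * (\<Sum>i<n. x i) + real n * mu\<^sup>2 / 2)"
    unfolding Wn_def by simp
  also have "\<dots> = gg mu (Mn n x)"
    using n by (simp add: gg_def Mn_def field_simps power2_eq_square)
  finally show "Wn mu n x = gg mu (Mn n x)" .
qed

lemma meas_gg[measurable]: "(\<lambda>m. (m, gg mu m)) \<in> borel_measurable borel"
  unfolding gg_def by measurable

lemma gN_Mn:
  assumes n: "0 < n"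
  shows "distr (Qn mu n) borel (Mn n) = gN mu (1 / sqrt (real n))"
proof -
  have "distr (Qn mu n) borel (Mn n) = distr (Qn mu n) lborel (Mn n)"
    by (rule distr_cong) auto
  also have "\<dots> = gN mu (1 / sqrt (real n))"
    using Mn_distributed[OF n, of mu] unfolding distributed_def gN_def by simp
  finally show ?thesis .
qed

lemma pair_law_eq:
  assumes n: "0 < n"
  shows "pair_law mu n = distr (gN mu (1 / sqrt (real n))) borel (\<lambda>m. (m, gg mu m))"
proof -
  have "pair_law mu n = distr (Qn mu n) borel (\<lambda>x. (Mn n x, gg mu (Mn n x)))"
    unfolding pair_law_def
    by (rule distr_cong_AE) (use Wn_AE[OF n, of mu] in \<open>auto simp: gg_def\<close>)
  also have "\<dots> = distr (distr (Qn mu n) borel (Mn n)) borel (\<lambda>m. (m, gg mu m))"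
    by (subst distr_distr) (auto simp: comp_def)
  also have "\<dots> = distr (gN mu (1 / sqrt (real n))) borel (\<lambda>m. (m, gg mu m))"
    by (simp add: gN_Mn[OF n])
  finally show ?thesis .
qed

lemma measure_pair_law:
  assumes n: "0 < n" and F: "F \<in> sets borel"
  shows "measure (pair_law mu n) F = measure (gN mu (1 / sqrt (real n))) {m. (m, gg mu m) \<in> F}"
proof -
  have "measure (pair_law mu n) F = measure (gN mu (1 / sqrt (real n))) ((\<lambda>m. (m, gg mu m)) -` F \<inter> space (gN mu (1 / sqrt (real n))))"
    unfolding pair_law_eq[OF n]
    by (rule measure_distr) (auto simp: F measurable_cong_sets[OF sets_gN refl])
  also have "(\<lambda>m. (m, gg mu m)) -` F \<inter> space (gN mu (1 / sqrt (real n))) = {m. (m, gg mu m) \<in> F}"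
    by (auto simp: gN_def)
  finally show ?thesis .
qed

lemma prob_pair_law: "prob_space (pair_law mu n)"
  unfolding pair_law_def
proof (rule prob_space.prob_space_distr)
  show "prob_space (Qn mu n)" by simp
  show "(\<lambda>x. (Mn n x, Wn mu n x)) \<in> measurable (Qn mu n) borel" by measurable
qed

lemma sets_pair_law[simp]: "sets (pair_law mu n) = sets borel"
  unfolding pair_law_def by simp




definition Jf :: "real \<Rightarrow> real \<times> real \<Rightarrow> ereal" where
  "Jf mu p = (if snd p = gg mu (fst p) then ereal ((fst p - mu)\<^sup>2 / 2) else \<infinity>)"

lemma Jf_nonneg: "0 \<le> Jf mu p"
  by (simp add: Jf_def)

lemma Jf_closed: "closed {x. Jf mu x \<le> c}"
proof (cases c)
  case (real r)
  have "{x. Jf mu x \<le> c} = {p. snd p = gg mu (fst p) \<and> (fst p - mu)\<^sup>2 / 2 \<le> r}"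
    using real by (auto simp: Jf_def)
  also have "closed \<dots>"
    unfolding gg_def
    by (intro closed_Collect_conj closed_Collect_eq closed_Collect_le continuous_intros) auto
  finally show ?thesis .
next
  case PInf
  then show ?thesis by simp
next
  case MInf
  then have E: "{x. Jf mu x \<le> c} = {}"
    by (auto simp: Jf_def split: if_splits)
  show ?thesis unfolding E by (rule closed_empty)
qed

lemma seq_eq:
  assumes n: "0 < n" and F: "F \<in> sets borel"
  shows "ereal (1 / real n) * elog (measure (pair_law mu n) F)
       = ereal (1 / real n) * elog (measure (gN mu (1 / sqrt (real n))) {m. (m, gg mu m) \<in> F})"
  using measure_pair_law[OF n F] by simp

lemma Jf_upper:
  assumes F: "closed F"
  shows "limsup (\<lambda>n. ereal (1 / real n) * elog (measure (pair_law mu n) F)) \<le> - (INF x\<in>F. Jf mu x)"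
proof -
  let ?s = "\<lambda>n. ereal (1 / real n) * elog (measure (pair_law mu n) F)"
  let ?A = "{m. (m, gg mu m) \<in> F}"
  let ?T = "INF x\<in>F. Jf mu x"
  have Fb: "F \<in> sets borel" using F by simp
  have Ab: "?A \<in> sets borel"
  proof -
    have "(\<lambda>m. (m, gg mu m)) -` F \<inter> space borel \<in> sets borel"
      by (rule measurable_sets[OF meas_gg Fb])
    then show ?thesis by (simp add: vimage_def)
  qed
  have T0: "0 \<le> ?T" by (intro INF_greatest Jf_nonneg)
  have claim: "limsup ?s \<le> ereal (- D)" if D0: "0 \<le> D" and DT: "ereal D \<le> ?T" for D
  proof (rule ereal_le_epsilon2)
    fix del :: real assume del: "0 < del"
    have AD: "\<forall>x\<in>?A. D \<le> (x - mu)\<^sup>2 / 2"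
    proof
      fix x assume "x \<in> ?A"
      then have "?T \<le> Jf mu (x, gg mu x)" by (auto intro: INF_lower)
      then have "ereal D \<le> Jf mu (x, gg mu x)" using DT by (rule order_trans[rotated])
      then show "D \<le> (x - mu)\<^sup>2 / 2" by (simp add: Jf_def)
    qed
    have ev: "eventually (\<lambda>n. ln 2 / real n < del) sequentially"
      using lim_const_over_n[of "ln 2"] del by (rule order_tendstoD)
    have "eventually (\<lambda>n. ?s n \<le> ereal (- D) + ereal del) sequentially"
      using ev eventually_gt_at_top[of 0]
    proof eventually_elim
      case (elim n)
      then have n: "0 < n" by simp
      have "?s n = ereal (1 / real n) * elog (measure (gN mu (1 / sqrt (real n))) ?A)"
        by (rule seq_eq[OF n Fb])
      also have "\<dots> \<le> ereal (1 / real n) * ereal (ln 2 - real n * D)"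
        by (intro ereal_mult_left_mono log_upper[OF n Ab D0 AD]) simp
      also have "\<dots> = ereal (ln 2 / real n - D)"
        using n by (simp add: field_simps)
      also have "\<dots> \<le> ereal (- D) + ereal del"
        using elim by simp
      finally show ?case .
    qed
    then show "limsup ?s \<le> ereal (- D) + ereal del"
      by (rule Limsup_bounded)
  qed
  show ?thesis
  proof (rule ccontr)
    assume "\<not> limsup ?s \<le> - ?T"
    then have "- limsup ?s < ?T"
      by (simp add: not_le ereal_uminus_less_reorder)
    then obtain D where D1: "- limsup ?s < ereal D" and D2: "ereal D < ?T"
      using ereal_dense2 by blast
    have "ereal (max D 0) \<le> ?T"
    proof (cases "D \<le> 0")
      case True
      then have "ereal (max D 0) = 0" by (simp add: zero_ereal_def)
      then show ?thesis using T0 by simp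
    next
      case False
      then show ?thesis using D2 by simp
    qed
    then have "limsup ?s \<le> ereal (- max D 0)"
      by (intro claim) simp_all
    then have "limsup ?s \<le> - ereal (max D 0)" by (simp only: uminus_ereal.simps(1))
    then have "- (- ereal (max D 0)) \<le> - limsup ?s"
      by (subst ereal_minus_le_minus)
    then have "ereal (max D 0) \<le> - limsup ?s" by (simp only: ereal_uminus_uminus)
    moreover have "ereal D \<le> ereal (max D 0)" by simp
    ultimately show False using D1 by order
  qed
qed


lemma Jf_lower:
  assumes G: "open G"
  shows "- (INF x\<in>G. Jf mu x) \<le> liminf (\<lambda>n. ereal (1 / real n) * elog (measure (pair_law mu n) G))"
proof -
  let ?s = "\<lambda>n. ereal (1 / real n) * elog (measure (pair_law mu n) G)"
  let ?A = "{m. (m, gg mu m) \<in> G}"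
  have Gb: "G \<in> sets borel" using G by simp
  have Aopen: "open ?A"
  proof -
    have "open ((\<lambda>m. (m, gg mu m)) -` G)"
      by (rule continuous_open_vimage[OF G]) (simp add: gg_def continuous_intros)
    then show ?thesis by (simp add: vimage_def)
  qed
  then have Ab: "?A \<in> sets borel" by simp
  have pt: "- liminf ?s \<le> Jf mu x" if x: "x \<in> G" for x
  proof (cases "snd x = gg mu (fst x)")
    case False then show ?thesis by (simp add: Jf_def)
  next
    case True
    define a where "a = fst x"
    define r where "r = \<bar>a - mu\<bar>"
    have r0: "0 \<le> r" unfolding r_def by simp
    have aA: "a \<in> ?A" using x True by (cases x) (simp add: a_def)
    obtain e0 where e0: "e0 > 0" "ball a e0 \<subseteq> ?A"
      using Aopen aA openE by blast
    have Jx: "Jf mu x = ereal (r\<^sup>2 / 2)" using True by (simp add: Jf_def a_def r_def)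
    have "ereal (- (r\<^sup>2 / 2)) \<le> liminf ?s"
    proof (rule ereal_le_epsilon2)
      fix del :: real assume del: "0 < del"
      define e where "e = min (e0 / 2) (min 1 (del / (2 * r + 1)))"
      have e1: "0 < e" unfolding e_def using e0 del r0 by simp
      have e2: "e \<le> 1" unfolding e_def by simp
      have e3: "e \<le> e0 / 2" unfolding e_def by (rule min.cobounded1)
      have e4: "e \<le> del / (2 * r + 1)" unfolding e_def by simp
      note e = e1 e2 e3 e4
      have eI: "{a..a+e} \<subseteq> ?A"
      proof
        fix y assume "y \<in> {a..a+e}"
        then have "dist a y < e0" using e by (auto simp: dist_real_def)
        then show "y \<in> ?A" using e0 by auto
      qed
      have sq: "(r + e)\<^sup>2 / 2 \<le> r\<^sup>2 / 2 + del / 2"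
      proof -
        have "e * e \<le> e * 1" using e by (intro mult_left_mono) auto
        moreover have "e * (2 * r + 1) \<le> del"
          using e(4) r0 by (simp add: field_simps)
        ultimately have "(r + e)\<^sup>2 \<le> r\<^sup>2 + del"
          by (simp add: power2_sum power2_eq_square algebra_simps)
        then show ?thesis by simp
      qed
      define C where "C = ln (e / sqrt (2 * pi))"
      have ev: "eventually (\<lambda>n. - (del / 2) < C / real n) sequentially"
        using lim_const_over_n[of C] by (rule order_tendstoD) (use del in simp)
      have "eventually (\<lambda>n. ereal (- (r\<^sup>2 / 2) - del) \<le> ?s n) sequentially"
        using ev eventually_gt_at_top[of 0]
      proof eventually_elim
        case (elim n)
        then have n: "0 < n" by simp
        have P: "0 < measure (gN mu (1 / sqrt (real n))) ?A"
          "C - real n * (\<bar>a - mu\<bar> + e)\<^sup>2 / 2 \<le> ln (measure (gN mu (1 / sqrt (real n))) ?A)"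
          using log_lower[OF n e(1) Ab, of a mu] eI unfolding C_def by auto
        have "?s n = ereal (1 / real n) * elog (measure (gN mu (1 / sqrt (real n))) ?A)"
          by (rule seq_eq[OF n Gb])
        also have "\<dots> = ereal (ln (measure (gN mu (1 / sqrt (real n))) ?A) / real n)"
          using P(1) by (simp add: elog_def)
        finally have s: "?s n = ereal (ln (measure (gN mu (1 / sqrt (real n))) ?A) / real n)" .
        have "(C - real n * (r + e)\<^sup>2 / 2) / real n \<le> ln (measure (gN mu (1 / sqrt (real n))) ?A) / real n"
          using P(2) n by (intro divide_right_mono) (auto simp: r_def)
        moreover have "(C - real n * (r + e)\<^sup>2 / 2) / real n = C / real n - (r + e)\<^sup>2 / 2"
          using n by (simp add: field_simps)
        ultimately have "C / real n - (r + e)\<^sup>2 / 2 \<le> ln (measure (gN mu (1 / sqrt (real n))) ?A) / real n"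
          by simp
        then have "- (r\<^sup>2 / 2) - del \<le> ln (measure (gN mu (1 / sqrt (real n))) ?A) / real n"
          using sq elim(1) by linarith
        then show ?case using s by simp
      qed
      then have "ereal (- (r\<^sup>2 / 2) - del) \<le> liminf ?s"
        by (rule Liminf_bounded)
      then have "ereal (- (r\<^sup>2 / 2) - del) + ereal del \<le> liminf ?s + ereal del"
        by (rule add_right_mono)
      then show "ereal (- (r\<^sup>2 / 2)) \<le> liminf ?s + ereal del" by simp
    qed
    then have "- liminf ?s \<le> - ereal (- (r\<^sup>2 / 2))"
      by (subst ereal_minus_le_minus)
    then show ?thesis using Jx by simp
  qed
  have "- liminf ?s \<le> (INF x\<in>G. Jf mu x)"
    by (rule INF_greatest) (rule pt)
  then show ?thesis by (subst ereal_uminus_le_reorder)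
qed

lemma Jf_LDP: "is_LDP_rate (pair_law mu) (Jf mu)"
  unfolding is_LDP_rate_def
proof (intro conjI allI impI)
  show "\<And>x. 0 \<le> Jf mu x" by (rule Jf_nonneg)
  show "\<And>c. closed {x. Jf mu x \<le> c}" by (rule Jf_closed)
  show "\<And>F. closed F \<Longrightarrow> limsup (\<lambda>n. ereal (1 / real n) * elog (measure (pair_law mu n) F)) \<le> - (INF x\<in>F. Jf mu x)"
    by (rule Jf_upper)
  show "\<And>G. open G \<Longrightarrow> - (INF x\<in>G. Jf mu x) \<le> liminf (\<lambda>n. ereal (1 / real n) * elog (measure (pair_law mu n) G))"
    by (rule Jf_lower)
qed




lemma LDP_le:
  fixes nu :: "nat \<Rightarrow> 'a::metric_space measure"
  assumes fin: "\<And>n. finite_measure (nu n)" and sets: "\<And>n. sets (nu n) = sets borel"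
    and L1: "is_LDP_rate nu I1" and L2: "is_LDP_rate nu I2"
  shows "I1 x \<le> I2 x"
proof (rule dense_le)
  fix c assume c: "c < I1 x"
  have cl: "closed {y. I1 y \<le> c}" using L1 by (simp add: is_LDP_rate_def)
  have "open (- {y. I1 y \<le> c})" using cl by (simp add: open_Compl)
  moreover have "x \<in> - {y. I1 y \<le> c}" using c by simp
  ultimately obtain e where e: "0 < e" "ball x e \<subseteq> - {y. I1 y \<le> c}"
    using openE by blast
  let ?F = "cball x (e / 2)"
  let ?B = "ball x (e / 2)"
  let ?s = "\<lambda>S n. ereal (1 / real n) * elog (measure (nu n) S)"
  have Fsub: "?F \<subseteq> ball x e" using e by (auto simp: subset_eq)
  have cF: "c \<le> (INF y\<in>?F. I1 y)"
  proof (rule INF_greatest)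
    fix y assume "y \<in> ?F"
    then have "y \<in> - {y. I1 y \<le> c}" using Fsub e(2) by blast
    then show "c \<le> I1 y" by simp
  qed
  have U: "limsup (?s ?F) \<le> - (INF y\<in>?F. I1 y)"
    using L1 by (simp add: is_LDP_rate_def)
  have Lw: "- (INF y\<in>?B. I2 y) \<le> liminf (?s ?B)"
    using L2 by (simp add: is_LDP_rate_def)
  have xB: "x \<in> ?B" using e by simp
  have "(INF y\<in>?B. I2 y) \<le> I2 x" using xB by (rule INF_lower)
  then have "- I2 x \<le> - (INF y\<in>?B. I2 y)" by (subst ereal_minus_le_minus)
  also have "\<dots> \<le> liminf (?s ?B)" by (rule Lw)
  also have "\<dots> \<le> liminf (?s ?F)"
  proof (rule Liminf_mono, rule always_eventually, rule allI)
    fix n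
    interpret finite_measure "nu n" by (rule fin)
    have "measure (nu n) ?B \<le> measure (nu n) ?F"
      by (rule finite_measure_mono) (auto simp: sets)
    then show "?s ?B n \<le> ?s ?F n"
      by (intro ereal_mult_left_mono elog_mono) simp_all
  qed
  also have "\<dots> \<le> limsup (?s ?F)" by (rule Liminf_le_Limsup) simp
  also have "\<dots> \<le> - (INF y\<in>?F. I1 y)" by (rule U)
  also have "\<dots> \<le> - c" using cF by (subst ereal_minus_le_minus)
  finally show "c \<le> I2 x" by (subst (asm) ereal_minus_le_minus)
qed

lemma J_Q_eq: "J_Q mu = Jf mu"
  unfolding J_Q_def
proof (rule the_equality)
  show "is_LDP_rate (pair_law mu) (Jf mu)" by (rule Jf_LDP)
next
  fix I assume I: "is_LDP_rate (pair_law mu) I"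
  have fin: "finite_measure (pair_law mu n)" for n
    using prob_pair_law[of mu n] by (simp add: prob_space_def)
  show "I = Jf mu"
  proof
    fix x show "I x = Jf mu x"
      by (rule antisym; rule LDP_le[OF fin sets_pair_law]) (use I Jf_LDP in auto)
  qed
qed

definition Bs :: "real \<Rightarrow> real set" where "Bs b = {..-b} \<union> {1..}"

lemma closure_Bs: "closure (Bs b) = Bs b"
  unfolding Bs_def by (intro closure_closed closed_Un closed_atMost closed_atLeast)

lemma I_QB_eq:
  "I_QB 1 (Bs b) w = (if w \<ge> 1/2 \<or> w \<le> - b - 1/2 then ereal ((w - 1/2)\<^sup>2 / 2) else \<infinity>)"
proof -
  have J: "Jf 1 (m, w) = (if w = m - 1/2 then ereal ((m - 1)\<^sup>2 / 2) else \<infinity>)" for m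
    by (simp add: Jf_def gg_def)
  have cond: "(w \<ge> 1/2 \<or> w \<le> - b - 1/2) \<longleftrightarrow> w + 1/2 \<in> Bs b"
    by (auto simp: Bs_def)
  have "I_QB 1 (Bs b) w = (INF m\<in>Bs b. Jf 1 (m, w))"
    unfolding I_QB_def J_Q_eq closure_Bs ..
  also have "\<dots> = (if w \<ge> 1/2 \<or> w \<le> - b - 1/2 then ereal ((w - 1/2)\<^sup>2 / 2) else \<infinity>)"
  proof (cases "w + 1/2 \<in> Bs b")
    case True
    have "(INF m\<in>Bs b. Jf 1 (m, w)) = ereal ((w - 1/2)\<^sup>2 / 2)"
    proof (rule antisym)
      have "(INF m\<in>Bs b. Jf 1 (m, w)) \<le> Jf 1 (w + 1/2, w)" using True by (rule INF_lower)
      also have "\<dots> = ereal ((w - 1/2)\<^sup>2 / 2)" by (simp add: J)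
      finally show "(INF m\<in>Bs b. Jf 1 (m, w)) \<le> ereal ((w - 1/2)\<^sup>2 / 2)" .
    next
      show "ereal ((w - 1/2)\<^sup>2 / 2) \<le> (INF m\<in>Bs b. Jf 1 (m, w))"
      proof (rule INF_greatest)
        fix m assume "m \<in> Bs b"
        show "ereal ((w - 1/2)\<^sup>2 / 2) \<le> Jf 1 (m, w)"
        proof (cases "w = m - 1/2")
          case True then show ?thesis by (subst J) simp
        next
          case False then show ?thesis by (subst J) simp
        qed
      qed
    qed
    then show ?thesis using True cond by simp
  next
    case False
    have "(INF m\<in>Bs b. Jf 1 (m, w)) = \<infinity>"
    proof (rule antisym)
      show "(INF m\<in>Bs b. Jf 1 (m, w)) \<le> \<infinity>" by simp
      show "\<infinity> \<le> (INF m\<in>Bs b. Jf 1 (m, w))"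
      proof (rule INF_greatest)
        fix m assume m: "m \<in> Bs b"
        then have "w \<noteq> m - 1/2" using False by auto
        then show "\<infinity> \<le> Jf 1 (m, w)" by (subst J) simp
      qed
    qed
    then show ?thesis using False cond by simp
  qed
  finally show ?thesis .
qed

lemma subdiff_iff:
  assumes b: "b > 1"
  shows "(-2) \<in> subdiff (I_QB 1 (Bs b)) (1/2) \<longleftrightarrow> b \<ge> 3"
proof -
  have f0: "I_QB 1 (Bs b) (1/2) = ereal 0" by (simp add: I_QB_eq)
  show ?thesis
  proof
    assume "(-2) \<in> subdiff (I_QB 1 (Bs b)) (1/2)"
    then have "I_QB 1 (Bs b) (1/2) + ereal (-2 * ((- b - 1/2) - 1/2)) \<le> I_QB 1 (Bs b) (- b - 1/2)"
      unfolding subdiff_def by blast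
    then have "2 * (b + 1) \<le> (b + 1)\<^sup>2 / 2"
      using b by (simp add: f0 I_QB_eq algebra_simps power2_eq_square)
    then have "4 * (b + 1) \<le> (b + 1) * (b + 1)" by (simp add: power2_eq_square)
    then have "4 \<le> b + 1" using b by (intro mult_right_le_imp_le[of 4 "b+1" "b+1"]) auto
    then show "b \<ge> 3" by simp
  next
    assume b3: "b \<ge> 3"
    show "(-2) \<in> subdiff (I_QB 1 (Bs b)) (1/2)"
      unfolding subdiff_def
    proof (intro CollectI allI)
      fix y
      show "I_QB 1 (Bs b) (1/2) + ereal (-2 * (y - 1/2)) \<le> I_QB 1 (Bs b) y"
      proof (cases "y \<ge> 1/2 \<or> y \<le> - b - 1/2")
        case False then show ?thesis by (simp add: I_QB_eq)
      next
        case True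
        have "-2 * (y - 1/2) \<le> (y - 1/2)\<^sup>2 / 2"
        proof (cases "y \<ge> 1/2")
          case True
          then have "-2 * (y - 1/2) \<le> 0" by simp
          also have "0 \<le> (y - 1/2)\<^sup>2 / 2" by simp
          finally show ?thesis .
        next
          case False
          then have y: "y \<le> - b - 1/2" using \<open>y \<ge> 1/2 \<or> y \<le> - b - 1/2\<close> by simp
          define t where "t = y - 1/2"
          have t4: "t + 4 \<le> 0" using y b3 unfolding t_def by simp
          have "0 \<le> (- t) * (- t - 4)" using t4 by (intro mult_nonneg_nonneg) auto
          then have "-2 * t \<le> t\<^sup>2 / 2" by (simp add: power2_eq_square algebra_simps)
          then show ?thesis by (simp add: t_def)
        qed
        then show ?thesis using True by (simp add: I_QB_eq f0)
      qed
    qed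
  qed
qed




definition xs :: "real \<Rightarrow> real \<Rightarrow> nat \<Rightarrow> real" where
  "xs b c n = - ln (measure (gN c (1 / sqrt (real n))) (Bs b)) / real n"

lemma Bs_sets[simp]: "Bs b \<in> sets borel"
  unfolding Bs_def by simp

lemma Bs_interval:
  assumes "m \<in> Bs b" "0 < e"
  shows "{m..m+e} \<subseteq> Bs b \<or> {m-e..m} \<subseteq> Bs b"
  using assms by (auto simp: Bs_def)

lemma Bs_pos:
  assumes n: "0 < n"
  shows "0 < measure (gN c (1 / sqrt (real n))) (Bs b)"
  using log_lower(1)[OF n zero_less_one Bs_sets Bs_interval[of 1 b 1]] by (simp add: Bs_def)

lemma xs_lower:
  assumes D: "0 \<le> D" and BD: "\<forall>m\<in>Bs b. D \<le> (m - c)\<^sup>2 / 2" and del: "0 < del"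
  shows "eventually (\<lambda>n. D - del \<le> xs b c n) sequentially"
proof -
  have ev: "eventually (\<lambda>n. ln 2 / real n < del) sequentially"
    using lim_const_over_n[of "ln 2"] del by (rule order_tendstoD)
  show ?thesis using ev eventually_gt_at_top[of 0]
  proof eventually_elim
    case (elim n)
    then have n: "0 < n" by simp
    have P: "0 < measure (gN c (1 / sqrt (real n))) (Bs b)" by (rule Bs_pos[OF n])
    have "elog (measure (gN c (1 / sqrt (real n))) (Bs b)) \<le> ereal (ln 2 - real n * D)"
      by (rule log_upper[OF n Bs_sets D BD])
    then have "ln (measure (gN c (1 / sqrt (real n))) (Bs b)) \<le> ln 2 - real n * D"
      using P by (simp add: elog_def)
    then have "(real n * D - ln 2) / real n \<le> - ln (measure (gN c (1 / sqrt (real n))) (Bs b)) / real n"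
      using n by (intro divide_right_mono) auto
    moreover have "(real n * D - ln 2) / real n = D - ln 2 / real n"
      using n by (simp add: field_simps)
    ultimately show ?case using elim(1) unfolding xs_def by linarith
  qed
qed

lemma xs_upper:
  assumes m: "m \<in> Bs b" and del: "0 < del"
  shows "eventually (\<lambda>n. xs b c n \<le> (m - c)\<^sup>2 / 2 + del) sequentially"
proof -
  define r where "r = \<bar>m - c\<bar>"
  have r0: "0 \<le> r" unfolding r_def by simp
  define e where "e = min 1 (del / (2 * r + 1))"
  have e1: "0 < e" unfolding e_def using del r0 by simp
  have e2: "e \<le> 1" unfolding e_def by simp
  have e4: "e \<le> del / (2 * r + 1)" unfolding e_def by simp
  have sq: "(r + e)\<^sup>2 / 2 \<le> r\<^sup>2 / 2 + del / 2"
  proof -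
    have "e * e \<le> e * 1" using e1 e2 by (intro mult_left_mono) auto
    moreover have "e * (2 * r + 1) \<le> del"
      using e4 r0 by (simp add: field_simps)
    ultimately have "(r + e)\<^sup>2 \<le> r\<^sup>2 + del"
      by (simp add: power2_sum power2_eq_square algebra_simps)
    then show ?thesis by simp
  qed
  define C where "C = ln (e / sqrt (2 * pi))"
  have ev: "eventually (\<lambda>n. - C / real n < del / 2) sequentially"
    using lim_const_over_n[of "- C"] by (rule order_tendstoD) (use del in simp)
  show ?thesis using ev eventually_gt_at_top[of 0]
  proof eventually_elim
    case (elim n)
    then have n: "0 < n" by simp
    have P: "C - real n * (\<bar>m - c\<bar> + e)\<^sup>2 / 2 \<le> ln (measure (gN c (1 / sqrt (real n))) (Bs b))"
      using log_lower(2)[OF n e1 Bs_sets Bs_interval[OF m e1], of c] unfolding C_def by simp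
    then have "- ln (measure (gN c (1 / sqrt (real n))) (Bs b)) / real n \<le> (real n * (r + e)\<^sup>2 / 2 - C) / real n"
      using n by (intro divide_right_mono) (auto simp: r_def)
    moreover have "(real n * (r + e)\<^sup>2 / 2 - C) / real n = (r + e)\<^sup>2 / 2 - C / real n"
      using n by (simp add: field_simps)
    ultimately show ?case using elim(1) sq unfolding xs_def r_def by (simp add: r_def)
  qed
qed

lemma lim_ge:
  fixes f :: "nat \<Rightarrow> real"
  assumes f: "f \<longlonglongrightarrow> L" and ev: "\<And>del. 0 < del \<Longrightarrow> eventually (\<lambda>n. D - del \<le> f n) sequentially"
  shows "D \<le> L"
proof (rule ccontr)
  assume "\<not> D \<le> L"
  then have "0 < (D - L) / 2" by simp
  from tendsto_lowerbound[OF f ev[OF this] trivial_limit_sequentially] show False using \<open>\<not> D \<le> L\<close> by (simp add: field_simps)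
qed

lemma lim_le:
  fixes f :: "nat \<Rightarrow> real"
  assumes f: "f \<longlonglongrightarrow> L" and ev: "\<And>del. 0 < del \<Longrightarrow> eventually (\<lambda>n. f n \<le> U + del) sequentially"
  shows "L \<le> U"
proof (rule ccontr)
  assume "\<not> L \<le> U"
  then have "0 < (L - U) / 2" by simp
  from tendsto_upperbound[OF f ev[OF this] trivial_limit_sequentially] show False using \<open>\<not> L \<le> U\<close> by (simp add: field_simps)
qed

lemma lim_squeeze:
  fixes f :: "nat \<Rightarrow> real"
  assumes lo: "\<And>del. 0 < del \<Longrightarrow> eventually (\<lambda>n. L - del \<le> f n) sequentially"
    and up: "\<And>del. 0 < del \<Longrightarrow> eventually (\<lambda>n. f n \<le> L + del) sequentially"
  shows "f \<longlonglongrightarrow> L"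
proof (rule order_tendstoI)
  fix a assume a: "a < L"
  have "eventually (\<lambda>n. L - (L - a) / 2 \<le> f n) sequentially" using a by (intro lo) simp
  then show "eventually (\<lambda>n. a < f n) sequentially"
    by eventually_elim (use a in \<open>simp add: field_simps\<close>)
next
  fix a assume a: "L < a"
  have "eventually (\<lambda>n. f n \<le> L + (a - L) / 2) sequentially" using a by (intro up) simp
  then show "eventually (\<lambda>n. f n < a) sequentially"
    by eventually_elim (use a in \<open>simp add: field_simps\<close>)
qed


lemma Pn_eq:
  assumes n: "0 < n" and B: "B \<in> sets borel"
  shows "measure (Qn mu n) {x \<in> space (Qn mu n). Mn n x \<in> B} = measure (gN mu (1 / sqrt (real n))) B"
proof -
  have "measure (gN mu (1 / sqrt (real n))) B = measure (distr (Qn mu n) borel (Mn n)) B"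
    by (simp add: gN_Mn[OF n])
  also have "\<dots> = measure (Qn mu n) (Mn n -` B \<inter> space (Qn mu n))"
    by (rule measure_distr) (auto simp: B)
  also have "Mn n -` B \<inter> space (Qn mu n) = {x \<in> space (Qn mu n). Mn n x \<in> B}" by auto
  finally show ?thesis by simp
qed

lemma dens_identity:
  assumes n: "0 < n"
  shows "normal_density mu (1 / sqrt (real n)) m * (exp (- mu * (real n * m) + real n * mu\<^sup>2 / 2))\<^sup>2
       = exp (real n * mu\<^sup>2) * normal_density (- mu) (1 / sqrt (real n)) m"
proof -
  have s2: "(1 / sqrt (real n))\<^sup>2 = 1 / real n" using n by (simp add: power_divide)
  define K where "K = 1 / sqrt (2 * pi * (1 / sqrt (real n))\<^sup>2)"
  have "exp (- (m - mu)\<^sup>2 / (2 * (1 / sqrt (real n))\<^sup>2)) * (exp (- mu * (real n * m) + real n * mu\<^sup>2 / 2))\<^sup>2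
      = exp (- (m - mu)\<^sup>2 / (2 * (1 / sqrt (real n))\<^sup>2) + 2 * (- mu * (real n * m) + real n * mu\<^sup>2 / 2))"
    by (simp add: power2_eq_square exp_add[symmetric])
  also have "- (m - mu)\<^sup>2 / (2 * (1 / sqrt (real n))\<^sup>2) + 2 * (- mu * (real n * m) + real n * mu\<^sup>2 / 2)
      = real n * mu\<^sup>2 + - (m - - mu)\<^sup>2 / (2 * (1 / sqrt (real n))\<^sup>2)"
    using n by (simp add: s2 field_simps power2_eq_square)
  also have "exp \<dots> = exp (real n * mu\<^sup>2) * exp (- (m - - mu)\<^sup>2 / (2 * (1 / sqrt (real n))\<^sup>2))"
    by (rule exp_add)
  finally have E: "exp (- (m - mu)\<^sup>2 / (2 * (1 / sqrt (real n))\<^sup>2)) * (exp (- mu * (real n * m) + real n * mu\<^sup>2 / 2))\<^sup>2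
      = exp (real n * mu\<^sup>2) * exp (- (m - - mu)\<^sup>2 / (2 * (1 / sqrt (real n))\<^sup>2))" .
  show ?thesis
    unfolding normal_density_def K_def[symmetric]
    using arg_cong[OF E, of "\<lambda>t. K * t"] by (simp add: ac_simps)
qed

lemma En_eq:
  assumes n: "0 < n" and B: "B \<in> sets borel"
  shows "(\<integral>\<^sup>+ x. (Ln mu n x)\<^sup>2 * indicator {x \<in> space (Qn mu n). Mn n x \<in> B} x \<partial>Qn mu n)
       = ennreal (exp (real n * mu\<^sup>2)) * emeasure (gN (- mu) (1 / sqrt (real n))) B"
proof -
  define h where "h m = (ennreal (exp (- mu * (real n * m) + real n * mu\<^sup>2 / 2)))\<^sup>2 * indicator B m" for m
  have hm[measurable]: "h \<in> borel_measurable borel" unfolding h_def using B by measurable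
  have "(\<integral>\<^sup>+ x. (Ln mu n x)\<^sup>2 * indicator {x \<in> space (Qn mu n). Mn n x \<in> B} x \<partial>Qn mu n)
      = (\<integral>\<^sup>+ x. h (Mn n x) \<partial>Qn mu n)"
  proof (rule nn_integral_cong_AE)
    show "AE x in Qn mu n. (Ln mu n x)\<^sup>2 * indicator {x \<in> space (Qn mu n). Mn n x \<in> B} x = h (Mn n x)"
      using AE_space Ln_AE[of mu n]
    proof eventually_elim
      case (elim x)
      then have x: "x \<in> space (Qn mu n)"
        and L: "Ln mu n x = ennreal (exp (- mu * (\<Sum>i<n. x i) + real n * mu\<^sup>2 / 2))" by auto
      have S: "(\<Sum>i<n. x i) = real n * Mn n x" using n by (simp add: Mn_def)
      show ?case
        using x unfolding L S h_def by (simp add: indicator_def)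
    qed
  qed
  also have "\<dots> = (\<integral>\<^sup>+ m. h m \<partial>distr (Qn mu n) borel (Mn n))"
    by (rule nn_integral_distr[symmetric]) simp_all
  also have "\<dots> = (\<integral>\<^sup>+ m. h m \<partial>gN mu (1 / sqrt (real n)))"
    by (simp add: gN_Mn[OF n])
  also have "\<dots> = (\<integral>\<^sup>+ m. ennreal (normal_density mu (1 / sqrt (real n)) m) * h m \<partial>lborel)"
    unfolding gN_def by (rule nn_integral_density) auto
  also have "\<dots> = (\<integral>\<^sup>+ m. ennreal (exp (real n * mu\<^sup>2)) * (ennreal (normal_density (- mu) (1 / sqrt (real n)) m) * indicator B m) \<partial>lborel)"
  proof (rule nn_integral_cong)
    fix m
    have "ennreal (normal_density mu (1 / sqrt (real n)) m) * (ennreal (exp (- mu * (real n * m) + real n * mu\<^sup>2 / 2)))\<^sup>2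
        = ennreal (normal_density mu (1 / sqrt (real n)) m * (exp (- mu * (real n * m) + real n * mu\<^sup>2 / 2))\<^sup>2)"
      by (simp add: ennreal_mult' ennreal_power)
    also have "\<dots> = ennreal (exp (real n * mu\<^sup>2) * normal_density (- mu) (1 / sqrt (real n)) m)"
      by (simp only: dens_identity[OF n])
    also have "\<dots> = ennreal (exp (real n * mu\<^sup>2)) * ennreal (normal_density (- mu) (1 / sqrt (real n)) m)"
      by (rule ennreal_mult') simp
    finally have eq: "ennreal (normal_density mu (1 / sqrt (real n)) m) * (ennreal (exp (- mu * (real n * m) + real n * mu\<^sup>2 / 2)))\<^sup>2
        = ennreal (exp (real n * mu\<^sup>2)) * ennreal (normal_density (- mu) (1 / sqrt (real n)) m)" .
    show "ennreal (normal_density mu (1 / sqrt (real n)) m) * h m = ennreal (exp (real n * mu\<^sup>2)) * (ennreal (normal_density (- mu) (1 / sqrt (real n)) m) * indicator B m)"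
      unfolding h_def using eq by (simp add: mult.assoc[symmetric])
  qed
  also have "\<dots> = ennreal (exp (real n * mu\<^sup>2)) * (\<integral>\<^sup>+ m. ennreal (normal_density (- mu) (1 / sqrt (real n)) m) * indicator B m \<partial>lborel)"
    using B by (intro nn_integral_cmult) auto
  also have "(\<integral>\<^sup>+ m. ennreal (normal_density (- mu) (1 / sqrt (real n)) m) * indicator B m \<partial>lborel) = emeasure (gN (- mu) (1 / sqrt (real n))) B"
    unfolding gN_def using B by (subst emeasure_density) auto
  finally show ?thesis .
qed

lemma En_real:
  assumes n: "0 < n" and B: "B \<in> sets borel"
  shows "enn2real (\<integral>\<^sup>+ x. (Ln mu n x)\<^sup>2 * indicator {x \<in> space (Qn mu n). Mn n x \<in> B} x \<partial>Qn mu n)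
       = exp (real n * mu\<^sup>2) * measure (gN (- mu) (1 / sqrt (real n))) B"
proof -
  interpret prob_space "gN (- mu) (1 / sqrt (real n))" using prob_gN[OF sig_n(1)[OF n]] .
  show ?thesis unfolding En_eq[OF n B] emeasure_eq_measure
    by (simp add: enn2real_mult)
qed


lemma seqs_eq:
  assumes n: "0 < n"
  shows "- ln (enn2real (\<integral>\<^sup>+ x. (Ln mu n x)\<^sup>2 * indicator {x \<in> space (Qn mu n). Mn n x \<in> Bs b} x \<partial>(Qn mu n))) / real n
         = - mu\<^sup>2 + xs b (- mu) n"
    "- ln (measure (Qn 0 n) {x \<in> space (Qn 0 n). Mn n x \<in> Bs b}) / real n = xs b 0 n"
proof -
  have P: "0 < measure (gN (- mu) (1 / sqrt (real n))) (Bs b)" by (rule Bs_pos[OF n])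
  have "ln (exp (real n * mu\<^sup>2) * measure (gN (- mu) (1 / sqrt (real n))) (Bs b))
      = real n * mu\<^sup>2 + ln (measure (gN (- mu) (1 / sqrt (real n))) (Bs b))"
    using P by (simp add: ln_mult)
  then show "- ln (enn2real (\<integral>\<^sup>+ x. (Ln mu n x)\<^sup>2 * indicator {x \<in> space (Qn mu n). Mn n x \<in> Bs b} x \<partial>(Qn mu n))) / real n
         = - mu\<^sup>2 + xs b (- mu) n"
    unfolding En_real[OF n Bs_sets] xs_def using n by (simp add: field_simps)
  show "- ln (measure (Qn 0 n) {x \<in> space (Qn 0 n). Mn n x \<in> Bs b}) / real n = xs b 0 n"
    unfolding Pn_eq[OF n Bs_sets] xs_def ..
qed

lemma eff_iff:
  assumes b: "b > 1"
  shows "asympt_efficient mu (Bs b) \<longleftrightarrow> mu = 1 \<and> b \<ge> 3"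
proof -
  let ?a = "\<lambda>n. - ln (enn2real (\<integral>\<^sup>+ x. (Ln mu n x)\<^sup>2 * indicator {x \<in> space (Qn mu n). Mn n x \<in> Bs b} x \<partial>(Qn mu n))) / real n"
  let ?p = "\<lambda>n. - ln (measure (Qn 0 n) {x \<in> space (Qn 0 n). Mn n x \<in> Bs b}) / real n"
  have eva: "eventually (\<lambda>n. - mu\<^sup>2 + xs b (- mu) n = ?a n) sequentially"
    using eventually_gt_at_top[of 0] by eventually_elim (rule seqs_eq(1)[symmetric])
  have evp: "eventually (\<lambda>n. xs b 0 n = ?p n) sequentially"
    using eventually_gt_at_top[of 0] by eventually_elim (rule seqs_eq(2)[symmetric])
  have B0: "\<forall>m\<in>Bs b. 1/2 \<le> (m - 0)\<^sup>2 / 2"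
  proof
    fix m assume "m \<in> Bs b"
    then have "1 \<le> m \<or> m \<le> -1" using b by (auto simp: Bs_def)
    then have "1 * 1 \<le> m * m"
    proof
      assume "1 \<le> m" then show ?thesis by (intro mult_mono) auto
    next
      assume "m \<le> -1" then have "1 * 1 \<le> (-m) * (-m)" by (intro mult_mono) auto
      then show ?thesis by simp
    qed
    then show "1/2 \<le> (m - 0)\<^sup>2 / 2" by (simp add: power2_eq_square)
  qed
  have one: "1 \<in> Bs b" by (simp add: Bs_def)
  have mb: "- b \<in> Bs b" by (simp add: Bs_def)
  show ?thesis
  proof
    assume "asympt_efficient mu (Bs b)"
    then obtain r where ra: "?a \<longlonglongrightarrow> r" and rp: "?p \<longlonglongrightarrow> r / 2"
      unfolding asympt_efficient_def by blast
    have x0: "xs b 0 \<longlonglongrightarrow> r / 2"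
      using rp by (rule Lim_transform_eventually) (use evp in \<open>simp add: eq_commute\<close>)
    have "(\<lambda>n. ?a n + mu\<^sup>2) \<longlonglongrightarrow> r + mu\<^sup>2"
      using ra by (intro tendsto_intros)
    moreover have "eventually (\<lambda>n. ?a n + mu\<^sup>2 = xs b (- mu) n) sequentially"
      using eva by eventually_elim simp
    ultimately have xm: "xs b (- mu) \<longlonglongrightarrow> r + mu\<^sup>2"
      by (rule Lim_transform_eventually)
    have "1/2 \<le> r / 2"
      by (rule lim_ge[OF x0]) (rule xs_lower[OF _ B0]; simp)
    moreover have "r / 2 \<le> (1 - 0)\<^sup>2 / 2"
      by (rule lim_le[OF x0]) (rule xs_upper[OF one])
    ultimately have r1: "r = 1" by simp
    have "r + mu\<^sup>2 \<le> (1 - - mu)\<^sup>2 / 2"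
      by (rule lim_le[OF xm]) (rule xs_upper[OF one])
    then have "(mu - 1)\<^sup>2 \<le> 0" using r1 by (simp add: power2_eq_square algebra_simps)
    then have mu1: "mu = 1" by simp
    have "r + mu\<^sup>2 \<le> (- b - - mu)\<^sup>2 / 2"
      by (rule lim_le[OF xm]) (rule xs_upper[OF mb])
    then have "2 * 2 \<le> (b - 1) * (b - 1)" using r1 mu1 by (simp add: power2_eq_square algebra_simps)
    then have "2 \<le> b - 1"
    proof (rule contrapos_pp)
      assume "\<not> 2 \<le> b - 1"
      then have "b - 1 < 2" by simp
      then have "(b - 1) * (b - 1) < 2 * 2" using b by (intro mult_strict_mono) auto
      then show "\<not> 2 * 2 \<le> (b - 1) * (b - 1)" by simp
    qed
    then show "mu = 1 \<and> b \<ge> 3" using mu1 by simp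
  next
    assume h: "mu = 1 \<and> b \<ge> 3"
    then have mu1: "mu = 1" and b3: "b \<ge> 3" by auto
    have B1: "\<forall>m\<in>Bs b. 2 \<le> (m - - 1)\<^sup>2 / 2"
    proof
      fix m assume "m \<in> Bs b"
      then have "2 \<le> m + 1 \<or> m + 1 \<le> -2" using b3 by (auto simp: Bs_def)
      then have "2 * 2 \<le> (m + 1) * (m + 1)"
      proof
        assume "2 \<le> m + 1" then show ?thesis by (intro mult_mono) auto
      next
        assume "m + 1 \<le> -2" then have "2 * 2 \<le> (-(m+1)) * (-(m+1))" by (intro mult_mono) auto
        then show ?thesis by (simp only: minus_mult_minus)
      qed
      then show "2 \<le> (m - - 1)\<^sup>2 / 2" by (simp add: power2_eq_square)
    qed
    have x0: "xs b 0 \<longlonglongrightarrow> 1 / 2"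
    proof (rule lim_squeeze)
      fix del :: real assume "0 < del"
      then show "eventually (\<lambda>n. 1 / 2 - del \<le> xs b 0 n) sequentially"
        by (intro xs_lower[OF _ B0]) simp_all
      show "eventually (\<lambda>n. xs b 0 n \<le> 1 / 2 + del) sequentially"
        using xs_upper[OF one \<open>0 < del\<close>, of 0] by simp
    qed
    have x1: "xs b (- mu) \<longlonglongrightarrow> 2"
      unfolding mu1
    proof (rule lim_squeeze)
      fix del :: real assume "0 < del"
      then show "eventually (\<lambda>n. 2 - del \<le> xs b (- 1) n) sequentially"
        by (intro xs_lower[OF _ B1]) simp_all
      show "eventually (\<lambda>n. xs b (- 1) n \<le> 2 + del) sequentially"
        using xs_upper[OF one \<open>0 < del\<close>, of "- 1"] by simp
    qed
    have "?a \<longlonglongrightarrow> 1"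
    proof -
      have "(\<lambda>n. - mu\<^sup>2 + xs b (- mu) n) \<longlonglongrightarrow> - mu\<^sup>2 + 2"
        using x1 by (intro tendsto_intros)
      then have "(\<lambda>n. - mu\<^sup>2 + xs b (- mu) n) \<longlonglongrightarrow> 1" using mu1 by simp
      then show ?thesis by (rule Lim_transform_eventually) (rule eva)
    qed
    moreover have "?p \<longlonglongrightarrow> 1 / 2"
      using x0 by (rule Lim_transform_eventually) (rule evp)
    ultimately show "asympt_efficient mu (Bs b)"
      unfolding asympt_efficient_def by (intro exI[of _ 1]) simp
  qed
qed


theorem mainTheorem5:
  fixes b :: real
  assumes "b > 1"
  shows "(\<forall>w. I_QB 1 ({..-b} \<union> {1..}) w =
            (if w \<ge> 1/2 \<or> w \<le> - b - 1/2 then ereal ((w - 1/2)\<^sup>2 / 2) else \<infinity>))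
       \<and> ((-2) \<in> subdiff (I_QB 1 ({..-b} \<union> {1..})) (1/2) \<longleftrightarrow> b \<ge> 3)
       \<and> (\<forall>mu::real. asympt_efficient mu ({..-b} \<union> {1..}) \<longleftrightarrow> mu = 1 \<and> b \<ge> 3)"
proof -
  have B: "{..-b} \<union> {1..} = Bs b" by (simp add: Bs_def)
  show ?thesis
    unfolding B using I_QB_eq[of b] subdiff_iff[OF assms] eff_iff[OF assms] by blast
qed

end
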